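(* Let $\mathcal N$ be an irreducible SDAN and let $n\neq n_f$ be an atom of $\mathcal N$ with more than one outcome. Then every agent of $A$ is a party of $n$.
   Context: Fix a finite nonempty set $A$ of agents; each $a\in A$ has a nonempty set $Q_a$ of internal states, $Q_A=\prod_{a\in A}Q_a$. A transformer is a left-total relation on $Q_A$; for $S\subseteq A$ an $S$-transformer is one with $(q,q')\in\tau\Rightarrow q_a=q'_a$ for all $a\notin S$. An atom is $n=(P_n,R_n,\delta_n)$: $P_n\subseteq A$ nonempty (parties), $R_n$ finite nonempty (outcomes), $\delta_n$ assigns to each $r\in R_n$ a $P_n$-transformer $\langle n,r\rangle$. A negotiation is $\mathcal N=(N,n_0,n_f,\mathcal X)$ with $N$ a finite set of atoms, $n_0,n_f\in N$ (possibly equal), $T(N)=\{(n,a,r): n\in N,a\in P_n,r\in R_n\}$, $\mathcal X:T(N)\to 2^N$, such that every agent is a party of $n_0$ and of $n_f$, and $\mathcal X(n,a,r)=\emptyset$ iff $n=n_f$. Its graph has vertices $N$ and edges $(n,n')$ whenever $n'\in\mathcal X(n,a,r)$ for some $(n,a,r)$; $\mathcal N$ is acyclic if the graph has no cycle. A marking is $x:A\to 2^N$; initial $x_0(a)=\{n_0\}$, final $x_f(a)=\emptyset$. $x$ enables $n$ if $n\in x(a)$ for all $a\in P_n$; then for $r\in R_n$ the step $(n,r)$ leads to $x'$ with $x'(a)=\mathcal X(n,a,r)$ for $a\in P_n$, $x'(a)=x(a)$ otherwise. A large step is a finite occurrence sequence from $x_0$ to $x_f$. $\mathcal N$ is sound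 if every atom is enabled at some reachable marking and every occurrence sequence from $x_0$ is a large step or can be extended to one. An agent $a$ is deterministic if for each $(n,a,r)\in T(N)$ with $n\ne n_f$, $\mathcal X(n,a,r)$ is a singleton; $\mathcal N$ is deterministic if all agents are deterministic. An SDAN is a sound, deterministic, acyclic negotiation. Merge rule. Guard: some atom $n$ has distinct outcomes $r_1,r_2$ with $\mathcal X(n,a,r_1)=\mathcal X(n,a,r_2)$ for all $a\in P_n$. Action: replace $r_1,r_2$ in $R_n$ by a fresh outcome $r_f$ with $\mathcal X(n,a,r_f)=\mathcal X(n,a,r_1)$ for $a\in P_n$ and $\langle n,r_f\rangle=\langle n,r_1\rangle\cup\langle n,r_2\rangle$. $(n,r)$ unconditionally enables $n'$ if $P_n\supseteq P_{n'}$ and $\mathcal X(n,a,r)=\{n'\}$ for all $a\in P_{n'}$. d-shortcut rule. Guard: atoms $n\neq n'$ and $r\in R_n$ such that $(n,r)$ unconditionally enables $n'$; $n'$ has at most one outcome; and if $n'\in\mathcal X(\tilde n,\tilde a,\tilde r)$ for at least one $(\tilde n,\tilde a,\tilde r)\in T(N)$ with $\tilde n\neq n$, then $\{n'\}=\mathcal X(\tilde n,\tilde a,\tilde r)$ for some $(\tilde n,\tilde a,\tilde r)\in T(N)$ with $\tilde n\ne n$. Action: (1) replace $R_n$ by $(R_n\setminus\{r\})\cup\{r'_f:r'\in R_{n'}\}$ with fresh names; (2) for $a\in P_{n'}$ set $\mathcal X(n,a,r'_f)=\mathcal X(n',a,r')$, for $a\in P_n\setminus P_{n'}$ set $\mathcal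 X(n,a,r'_f)=\mathcal X(n,a,r)$; (3) $\langle n,r'_f\rangle=\langle n,r\rangle\langle n',r'\rangle$ (relational composition); (4) if afterwards $n'\notin\mathcal X(\tilde n,\tilde a,\tilde r)$ for all $(\tilde n,\tilde a,\tilde r)\in T(N)$, remove $n'$. An SDAN is irreducible if neither the merge rule nor the d-shortcut rule can be applied to it. *)

theory Defs
  imports "HOL-Library.FuncSet"
begin

record ('a, 's, 'n, 'r) negotiation =
  agents :: "'a set"
  states :: "'a \<Rightarrow> 's set"
  atoms :: "'n set"
  init :: 'n
  fin :: 'n
  parties :: "'n \<Rightarrow> 'a set"
  outcomes :: "'n \<Rightarrow> 'r set"
  trans :: "'n \<Rightarrow> 'r \<Rightarrow> (('a \<Rightarrow> 's) \<times> ('a \<Rightarrow> 's)) set"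
  succ :: "'n \<Rightarrow> 'a \<Rightarrow> 'r \<Rightarrow> 'n set"

definition global_states :: "('a, 's, 'n, 'r) negotiation \<Rightarrow> ('a \<Rightarrow> 's) set" where
  "global_states \<N> = PiE (agents \<N>) (states \<N>)"

definition is_transformer :: "('a, 's, 'n, 'r) negotiation \<Rightarrow> 'a set \<Rightarrow> (('a \<Rightarrow> 's) \<times> ('a \<Rightarrow> 's)) set \<Rightarrow> bool" where
  "is_transformer \<N> S \<tau> \<longleftrightarrow>
     \<tau> \<subseteq> global_states \<N> \<times> global_states \<N> \<and>
     (\<forall>q \<in> global_states \<N>. \<exists>q'. (q, q') \<in> \<tau>) \<and>
     (\<forall>(q, q') \<in> \<tau>. \<forall>a \<in> agents \<N> - S. q a = q' a)"

definition T :: "('a, 's, 'n, 'r) negotiation \<Rightarrow> ('n \<times> 'a \<times> 'r) set" where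
  "T \<N> = {(n, a, r). n \<in> atoms \<N> \<and> a \<in> parties \<N> n \<and> r \<in> outcomes \<N> n}"

definition negotiation :: "('a, 's, 'n, 'r) negotiation \<Rightarrow> bool" where
  "negotiation \<N> \<longleftrightarrow>
     finite (agents \<N>) \<and> agents \<N> \<noteq> {} \<and>
     (\<forall>a \<in> agents \<N>. states \<N> a \<noteq> {}) \<and>
     finite (atoms \<N>) \<and> init \<N> \<in> atoms \<N> \<and> fin \<N> \<in> atoms \<N> \<and>
     (\<forall>n \<in> atoms \<N>.
        parties \<N> n \<noteq> {} \<and> parties \<N> n \<subseteq> agents \<N> \<and>
        finite (outcomes \<N> n) \<and> outcomes \<N> n \<noteq> {} \<and>
        (\<forall>r \<in> outcomes \<N> n. is_transformer \<N> (parties \<N> n) (trans \<N> n r))) \<and>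
     parties \<N> (init \<N>) = agents \<N> \<and> parties \<N> (fin \<N>) = agents \<N> \<and>
     (\<forall>(n, a, r) \<in> T \<N>. succ \<N> n a r \<subseteq> atoms \<N> \<and>
        (succ \<N> n a r = {} \<longleftrightarrow> n = fin \<N>))"

definition graph :: "('a, 's, 'n, 'r) negotiation \<Rightarrow> ('n \<times> 'n) set" where
  "graph \<N> = {(n, n'). \<exists>a r. (n, a, r) \<in> T \<N> \<and> n' \<in> succ \<N> n a r}"

definition acyclic_neg :: "('a, 's, 'n, 'r) negotiation \<Rightarrow> bool" where
  "acyclic_neg \<N> \<longleftrightarrow> acyclic (graph \<N>)"

text \<open>Markings. Agents outside A always carry the empty set.\<close>

definition x0 :: "('a, 's, 'n, 'r) negotiation \<Rightarrow> 'a \<Rightarrow> 'n set" where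
  "x0 \<N> = (\<lambda>a. if a \<in> agents \<N> then {init \<N>} else {})"

definition xf :: "'a \<Rightarrow> 'n set" where
  "xf = (\<lambda>a. {})"

definition enables :: "('a, 's, 'n, 'r) negotiation \<Rightarrow> ('a \<Rightarrow> 'n set) \<Rightarrow> 'n \<Rightarrow> bool" where
  "enables \<N> x n \<longleftrightarrow> (\<forall>a \<in> parties \<N> n. n \<in> x a)"

definition step :: "('a, 's, 'n, 'r) negotiation \<Rightarrow> ('a \<Rightarrow> 'n set) \<Rightarrow> 'n \<times> 'r \<Rightarrow> ('a \<Rightarrow> 'n set) \<Rightarrow> bool" where
  "step \<N> x nr x' \<longleftrightarrow> (case nr of (n, r) \<Rightarrow>
     n \<in> atoms \<N> \<and> r \<in> outcomes \<N> n \<and> enables \<N> x n \<and>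
     x' = (\<lambda>a. if a \<in> parties \<N> n then succ \<N> n a r else x a))"

inductive run :: "('a, 's, 'n, 'r) negotiation \<Rightarrow> ('a \<Rightarrow> 'n set) \<Rightarrow> ('n \<times> 'r) list \<Rightarrow> ('a \<Rightarrow> 'n set) \<Rightarrow> bool"
  for \<N> where
  run_Nil: "run \<N> x [] x"
| run_Cons: "step \<N> x s y \<Longrightarrow> run \<N> y \<sigma> z \<Longrightarrow> run \<N> x (s # \<sigma>) z"

definition reachable :: "('a, 's, 'n, 'r) negotiation \<Rightarrow> ('a \<Rightarrow> 'n set) \<Rightarrow> bool" where
  "reachable \<N> x \<longleftrightarrow> (\<exists>\<sigma>. run \<N> (x0 \<N>) \<sigma> x)"

definition sound :: "('a, 's, 'n, 'r) negotiation \<Rightarrow> bool" where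
  "sound \<N> \<longleftrightarrow>
     (\<forall>n \<in> atoms \<N>. \<exists>x. reachable \<N> x \<and> enables \<N> x n) \<and>
     (\<forall>\<sigma> x. run \<N> (x0 \<N>) \<sigma> x \<longrightarrow> (\<exists>\<sigma>'. run \<N> x \<sigma>' xf))"

definition deterministic_agent :: "('a, 's, 'n, 'r) negotiation \<Rightarrow> 'a \<Rightarrow> bool" where
  "deterministic_agent \<N> a \<longleftrightarrow>
     (\<forall>n r. (n, a, r) \<in> T \<N> \<and> n \<noteq> fin \<N> \<longrightarrow> (\<exists>n'. succ \<N> n a r = {n'}))"

definition deterministic :: "('a, 's, 'n, 'r) negotiation \<Rightarrow> bool" where
  "deterministic \<N> \<longleftrightarrow> (\<forall>a \<in> agents \<N>. deterministic_agent \<N> a)"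

definition SDAN :: "('a, 's, 'n, 'r) negotiation \<Rightarrow> bool" where
  "SDAN \<N> \<longleftrightarrow> negotiation \<N> \<and> sound \<N> \<and> deterministic \<N> \<and> acyclic_neg \<N>"

text \<open>Guards of the reduction rules (a rule can be applied iff its guard holds).\<close>

definition merge_guard :: "('a, 's, 'n, 'r) negotiation \<Rightarrow> bool" where
  "merge_guard \<N> \<longleftrightarrow>
     (\<exists>n \<in> atoms \<N>. \<exists>r1 \<in> outcomes \<N> n. \<exists>r2 \<in> outcomes \<N> n.
        r1 \<noteq> r2 \<and> (\<forall>a \<in> parties \<N> n. succ \<N> n a r1 = succ \<N> n a r2))"

definition uncond_enables :: "('a, 's, 'n, 'r) negotiation \<Rightarrow> 'n \<Rightarrow> 'r \<Rightarrow> 'n \<Rightarrow> bool" where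
  "uncond_enables \<N> n r n' \<longleftrightarrow>
     parties \<N> n' \<subseteq> parties \<N> n \<and> (\<forall>a \<in> parties \<N> n'. succ \<N> n a r = {n'})"

definition dshortcut_guard :: "('a, 's, 'n, 'r) negotiation \<Rightarrow> bool" where
  "dshortcut_guard \<N> \<longleftrightarrow>
     (\<exists>n \<in> atoms \<N>. \<exists>n' \<in> atoms \<N>. \<exists>r \<in> outcomes \<N> n.
        n \<noteq> n' \<and> uncond_enables \<N> n r n' \<and> card (outcomes \<N> n') \<le> 1 \<and>
        ((\<exists>(m, b, s) \<in> T \<N>. m \<noteq> n \<and> n' \<in> succ \<N> m b s) \<longrightarrow>
         (\<exists>(m, b, s) \<in> T \<N>. m \<noteq> n \<and> succ \<N> m b s = {n'})))"

definition irreducible :: "('a, 's, 'n, 'r) negotiation \<Rightarrow> bool" where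
  "irreducible \<N> \<longleftrightarrow> SDAN \<N> \<and> \<not> merge_guard \<N> \<and> \<not> dshortcut_guard \<N>"

end

theory Submission
  imports Defs
begin

lemma run_Nil_iff: "run N x [] z \<longleftrightarrow> z = x"
  by (auto intro: run_Nil elim: run.cases)

lemma run_Cons_iff: "run N x (p # \<sigma>) z \<longleftrightarrow> (\<exists>y. step N x p y \<and> run N y \<sigma> z)"
  by (auto intro: run_Cons elim: run.cases)

lemma run_append: "run N x (\<alpha> @ \<beta>) y \<longleftrightarrow> (\<exists>u. run N x \<alpha> u \<and> run N u \<beta> y)"
  by (induction \<alpha> arbitrary: x) (auto simp: run_Nil_iff run_Cons_iff)

lemma step_iff: "step N x (k, s) x' \<longleftrightarrow> k \<in> atoms N \<and> s \<in> outcomes N k \<and> enables N x k \<and>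
     x' = (\<lambda>a. if a \<in> parties N k then succ N k a s else x a)"
  by (simp add: step_def)

lemma reachable_run: "reachable N x \<Longrightarrow> run N x \<pi> y \<Longrightarrow> reachable N y"
  unfolding reachable_def by (metis run_append)

definition SING :: "('a \<Rightarrow> 'n set) \<Rightarrow> bool" where
  "SING x \<longleftrightarrow> (\<forall>b. x b = {} \<or> (\<exists>k. x b = {k}))"

lemma T_mem: "(k, b, s) \<in> T N \<longleftrightarrow> k \<in> atoms N \<and> b \<in> parties N k \<and> s \<in> outcomes N k"
  by (simp add: T_def)

lemma neg_basic:
  assumes "negotiation N"
  shows "finite (atoms N)" "finite (agents N)" "agents N \<noteq> {}" "init N \<in> atoms N" "fin N \<in> atoms N"
    "parties N (fin N) = agents N"
  using assms by (simp_all add: negotiation_def)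

lemma neg_atom:
  assumes "negotiation N" "k \<in> atoms N"
  shows "parties N k \<noteq> {}" "parties N k \<subseteq> agents N" "finite (outcomes N k)" "outcomes N k \<noteq> {}"
  using assms by (simp_all add: negotiation_def)

lemma succ_facts:
  assumes "negotiation N" "k \<in> atoms N" "b \<in> parties N k" "s \<in> outcomes N k"
  shows "succ N k b s \<subseteq> atoms N" "succ N k b s = {} \<longleftrightarrow> k = fin N"
proof -
  have all: "\<forall>(n, a, r) \<in> T N. succ N n a r \<subseteq> atoms N \<and> (succ N n a r = {} \<longleftrightarrow> n = fin N)"
    using assms(1) by (simp add: negotiation_def)
  have t: "(k, b, s) \<in> T N" using assms(2-4) by (simp add: T_mem)
  from bspec[OF all t] show "succ N k b s \<subseteq> atoms N" "succ N k b s = {} \<longleftrightarrow> k = fin N" by simp_all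
qed

lemma succ_det:
  assumes "negotiation N" "deterministic N" "k \<in> atoms N" "b \<in> parties N k" "s \<in> outcomes N k"
    "k \<noteq> fin N"
  shows "\<exists>k'. succ N k b s = {k'}"
proof -
  have "b \<in> agents N" using neg_atom(2)[OF assms(1,3)] assms(4) by blast
  then have "deterministic_agent N b" using assms(2) unfolding deterministic_def by blast
  moreover have t: "(k, b, s) \<in> T N" using assms(3-5) by (simp add: T_mem)
  ultimately show ?thesis using assms(6) unfolding deterministic_agent_def by blast
qed

lemma step_SING:
  assumes "negotiation N" "deterministic N" "step N x (k, s) x'" "SING x"
  shows "SING x'"
  unfolding SING_def
proof
  fix b
  from assms(3) have st: "k \<in> atoms N" "s \<in> outcomes N k"
    "x' = (\<lambda>a. if a \<in> parties N k then succ N k a s else x a)" by (auto simp: step_iff)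
  show "x' b = {} \<or> (\<exists>k. x' b = {k})"
  proof (cases "b \<in> parties N k")
    case True
    then show ?thesis using st succ_det[OF assms(1,2) st(1) True st(2)] succ_facts(2)[OF assms(1) st(1) True st(2)]
      by auto
  next
    case False
    then show ?thesis using st assms(4) unfolding SING_def by simp
  qed
qed

lemma run_SING:
  assumes "negotiation N" "deterministic N"
  shows "run N x \<pi> y \<Longrightarrow> SING x \<Longrightarrow> SING y"
proof (induction rule: run.induct)
  case (run_Nil x) then show ?case .
next
  case (run_Cons x p y \<sigma> z)
  then show ?case using step_SING[OF assms] by (metis prod.exhaust)
qed

lemma reachable_SING:
  assumes "negotiation N" "deterministic N" "reachable N x"
  shows "SING x"
proof -
  have "SING (x0 N)" unfolding SING_def x0_def by auto
  then show ?thesis using assms run_SING unfolding reachable_def by blast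
qed

lemma enabled_tok: "SING x \<Longrightarrow> enables N x k \<Longrightarrow> c \<in> parties N k \<Longrightarrow> x c = {k}"
  unfolding SING_def enables_def by fastforce

lemma graph_I: "(k, b, s) \<in> T N \<Longrightarrow> k' \<in> succ N k b s \<Longrightarrow> (k, k') \<in> graph N"
  unfolding graph_def by blast

lemma graph_sub: "negotiation N \<Longrightarrow> graph N \<subseteq> atoms N \<times> atoms N"
proof
  fix p assume neg: "negotiation N" and "p \<in> graph N"
  then obtain k k' b s where p: "p = (k, k')" "(k, b, s) \<in> T N" "k' \<in> succ N k b s"
    unfolding graph_def by blast
  then have "k \<in> atoms N" "b \<in> parties N k" "s \<in> outcomes N k" by (simp_all add: T_mem)
  then show "p \<in> atoms N \<times> atoms N" using succ_facts(1)[OF neg] p by blast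
qed

definition mu :: "('a, 's, 'n, 'r) negotiation \<Rightarrow> ('a \<Rightarrow> 'n set) \<Rightarrow> nat" where
  "mu N x = (\<Sum>b\<in>agents N. card ((graph N)\<^sup>* `` x b))"

lemma mu_step:
  assumes neg: "negotiation N" and acy: "acyclic (graph N)" and st: "step N x (k, s) x'"
    and sg: "SING x"
  shows "mu N x' < mu N x"
proof -
  from st have k: "k \<in> atoms N" "s \<in> outcomes N k" "enables N x k"
    and x': "x' = (\<lambda>a. if a \<in> parties N k then succ N k a s else x a)"
    by (auto simp: step_iff)
  have fin: "finite (atoms N)" "finite (agents N)" using neg_basic[OF neg] by auto
  have tsub: "(graph N)\<^sup>+ \<subseteq> atoms N \<times> atoms N" using trancl_subset_Sigma[OF graph_sub[OF neg]] .
  have pk: "parties N k \<noteq> {}" "parties N k \<subseteq> agents N" using neg_atom[OF neg k(1)] by auto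
  have le: "card ((graph N)\<^sup>* `` x' b) < card ((graph N)\<^sup>* `` x b)" if b: "b \<in> parties N k" for b
  proof -
    have xb: "x b = {k}" using enabled_tok[OF sg k(3) b] .
    have "(graph N)\<^sup>* `` x' b \<subseteq> (graph N)\<^sup>+ `` {k}"
    proof
      fix y assume "y \<in> (graph N)\<^sup>* `` x' b"
      moreover have "x' b = succ N k b s" using x' b by simp
      ultimately obtain k' where k': "k' \<in> succ N k b s" "(k', y) \<in> (graph N)\<^sup>*" by auto
      have "(k, k') \<in> graph N" using graph_I[of k b s N k'] k k'(1) b by (simp add: T_mem)
      then show "y \<in> (graph N)\<^sup>+ `` {k}" using rtrancl_into_trancl2[OF _ k'(2)] by blast
    qed
    note sub = this
    have f1: "finite ((graph N)\<^sup>+ `` {k})"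
      by (rule finite_subset[OF _ fin(1)]) (use tsub in blast)
    have nk: "k \<notin> (graph N)\<^sup>+ `` {k}" using acy unfolding acyclic_def by blast
    have ins: "(graph N)\<^sup>* `` x b = insert k ((graph N)\<^sup>+ `` {k})"
      unfolding xb by (auto dest: rtranclD intro: trancl_into_rtrancl)
    have c1: "card ((graph N)\<^sup>* `` x' b) \<le> card ((graph N)\<^sup>+ `` {k})"
      by (rule card_mono[OF f1 sub])
    have c2: "card ((graph N)\<^sup>* `` x b) = Suc (card ((graph N)\<^sup>+ `` {k}))"
      unfolding ins by (rule card_insert_disjoint[OF f1 nk])
    show ?thesis using c1 c2 by linarith
  qed
  have eq: "card ((graph N)\<^sup>* `` x' b) \<le> card ((graph N)\<^sup>* `` x b)" for b
    using le[of b] x' by (cases "b \<in> parties N k") auto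
  obtain b0 where b0: "b0 \<in> parties N k" using pk by blast
  show ?thesis unfolding mu_def
  proof (rule sum_strict_mono_ex1[OF fin(2)])
    show "\<forall>b\<in>agents N. card ((graph N)\<^sup>* `` x' b) \<le> card ((graph N)\<^sup>* `` x b)"
      using eq by blast
    show "\<exists>b\<in>agents N. card ((graph N)\<^sup>* `` x' b) < card ((graph N)\<^sup>* `` x b)"
      using b0 le pk(2) by blast
  qed
qed

lemma mu_run:
  assumes "negotiation N" "deterministic N" "acyclic (graph N)"
  shows "run N x \<pi> y \<Longrightarrow> SING x \<Longrightarrow> mu N y \<le> mu N x"
proof (induction rule: run.induct)
  case (run_Nil x) then show ?case by simp
next
  case (run_Cons x p y \<sigma> z)
  obtain k s where p: "p = (k, s)" by (cases p)
  have st: "step N x (k, s) y" using run_Cons(1) p by simp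
  have sy: "SING y" by (rule step_SING[OF assms(1,2) st run_Cons(4)])
  have "mu N y < mu N x" by (rule mu_step[OF assms(1,3) st run_Cons(4)])
  moreover have "mu N z \<le> mu N y" by (rule run_Cons(3)[OF sy])
  ultimately show ?case by linarith
qed

lemma token_leave:
  "run N u \<delta> y \<Longrightarrow> u b = {k} \<Longrightarrow> y b \<noteq> {k} \<Longrightarrow> \<exists>s. (k, s) \<in> set \<delta> \<and> b \<in> parties N k"
proof (induction rule: run.induct)
  case (run_Nil x) then show ?case by simp
next
  case (run_Cons x p y \<sigma> z)
  obtain k1 s1 where p: "p = (k1, s1)" by (cases p)
  show ?case
  proof (cases "b \<in> parties N k1")
    case True
    then have "k1 = k" using run_Cons(1,4) p by (auto simp: step_iff enables_def)
    then show ?thesis using p True by auto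
  next
    case False
    then have "y b = x b" using run_Cons(1) p by (auto simp: step_iff)
    then show ?thesis using run_Cons by auto
  qed
qed

lemma track:
  "run N u \<delta> y \<Longrightarrow> (k', s) \<in> set \<delta> \<Longrightarrow> b \<in> parties N k' \<Longrightarrow>
   \<exists>k\<in>u b. k' = k \<or> (k \<in> fst ` set \<delta> \<and> (k, k') \<in> (graph N)\<^sup>+)"
proof (induction rule: run.induct)
  case (run_Nil x) then show ?case by simp
next
  case (run_Cons x p y \<sigma> z)
  obtain k1 s1 where p: "p = (k1, s1)" by (cases p)
  from run_Cons(1) p have st: "k1 \<in> atoms N" "s1 \<in> outcomes N k1" "enables N x k1"
    "y = (\<lambda>a. if a \<in> parties N k1 then succ N k1 a s1 else x a)" by (auto simp: step_iff)
  show ?case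
  proof (cases "(k', s) = p")
    case True
    then show ?thesis using st(3) run_Cons(5) p unfolding enables_def by auto
  next
    case False
    then have "(k', s) \<in> set \<sigma>" using run_Cons(4) by auto
    from run_Cons(3)[OF this run_Cons(5)] obtain k2 where
      k2: "k2 \<in> y b" "k' = k2 \<or> (k2 \<in> fst ` set \<sigma> \<and> (k2, k') \<in> (graph N)\<^sup>+)" by blast
    show ?thesis
    proof (cases "b \<in> parties N k1")
      case True
      then have "k2 \<in> succ N k1 b s1" using k2 st by simp
      then have g: "(k1, k2) \<in> graph N" using graph_I[of k1 b s1 N k2] st True by (simp add: T_mem)
      have "(k1, k') \<in> (graph N)\<^sup>+" using k2(2) g by auto
      moreover have "k1 \<in> x b" using st(3) True unfolding enables_def by auto
      moreover have "k1 \<in> fst ` set (p # \<sigma>)" using p by simp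
      ultimately show ?thesis by blast
    next
      case False
      have "k2 \<in> x b" using k2(1) st(4) False by simp
      moreover have "fst ` set \<sigma> \<subseteq> fst ` set (p # \<sigma>)" by auto
      ultimately show ?thesis using k2(2) by blast
    qed
  qed
qed

lemma reach_fin:
  assumes neg: "negotiation N"
  shows "run N u \<pi> y \<Longrightarrow> u c \<noteq> {} \<Longrightarrow> y c = {} \<Longrightarrow> \<exists>s. (fin N, s) \<in> set \<pi>"
proof (induction rule: run.induct)
  case (run_Nil x) then show ?case by simp
next
  case (run_Cons x p y \<sigma> z)
  obtain k1 s1 where p: "p = (k1, s1)" by (cases p)
  from run_Cons(1) p have st: "k1 \<in> atoms N" "s1 \<in> outcomes N k1" "enables N x k1"
    "y = (\<lambda>a. if a \<in> parties N k1 then succ N k1 a s1 else x a)" by (auto simp: step_iff)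
  show ?case
  proof (cases "k1 = fin N")
    case True then show ?thesis using p by auto
  next
    case False
    have "y c \<noteq> {}"
      using st run_Cons(4) False succ_facts(2)[OF neg st(1) _ st(2), of c] by auto
    then show ?thesis using run_Cons by auto
  qed
qed

definition R where
  "R N x \<alpha> y b k \<longleftrightarrow> (\<exists>\<gamma> \<delta> u. \<alpha> = \<gamma> @ \<delta> \<and> run N x \<gamma> u \<and> run N u \<delta> y \<and> u b = {k})"

lemma vis: "R N x \<alpha> y b k \<Longrightarrow> y b = {F} \<Longrightarrow> k = F \<or> (\<exists>s. (k, s) \<in> set \<alpha> \<and> b \<in> parties N k)"
proof -
  assume "R N x \<alpha> y b k" "y b = {F}"
  then obtain \<gamma> \<delta> u where a: "\<alpha> = \<gamma> @ \<delta>" "run N u \<delta> y" "u b = {k}"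
    unfolding R_def by blast
  show ?thesis
  proof (cases "k = F")
    case False
    then have "y b \<noteq> {k}" using \<open>y b = {F}\<close> by simp
    from token_leave[OF a(2,3) this] a(1) show ?thesis by auto
  qed simp
qed

definition Q :: "('a, 's, 'n, 'r) negotiation \<Rightarrow> 'n \<Rightarrow> bool" where
  "Q N k \<longleftrightarrow> agents N \<subseteq> parties N k \<or> 1 < card (outcomes N k)"

definition INV where
  "INV N n r1 x2 \<alpha>2 y2 u \<longleftrightarrow> (\<forall>b\<in>agents N. \<forall>k. u b = {k} \<longrightarrow>
      (b \<in> parties N n \<and> succ N n b r1 = {k}) \<or> R N x2 \<alpha>2 y2 b k)"

lemma irr_facts:
  assumes "irreducible N"
  shows "negotiation N" "sound N" "deterministic N" "acyclic (graph N)" "\<not> merge_guard N"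
    "\<not> dshortcut_guard N"
  using assms unfolding irreducible_def SDAN_def acyclic_neg_def by simp_all

lemma one_outcome:
  assumes "negotiation N" "k \<in> atoms N" "\<not> Q N k" "s \<in> outcomes N k" "s' \<in> outcomes N k"
  shows "s' = s"
proof -
  have "card (outcomes N k) \<le> Suc 0" using assms(3) unfolding Q_def by simp
  then show ?thesis using card_le_Suc0_iff_eq[OF neg_atom(3)[OF assms(1,2)]] assms(4,5) by blast
qed

lemma inv_run:
  assumes irr: "irreducible N" and n: "n \<in> atoms N" "r1 \<in> outcomes N n"
    and run2: "run N x2 \<alpha>2 y2" and nQ2: "\<forall>p\<in>set \<alpha>2. \<not> Q N (fst p)" and QF2: "Q N F2"
    and y2F: "\<forall>c\<in>agents N. y2 c = {F2}"
  shows "run N u \<delta> y \<Longrightarrow> SING u \<Longrightarrow> (\<forall>p\<in>set \<delta>. \<not> Q N (fst p)) \<Longrightarrow>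
    INV N n r1 x2 \<alpha>2 y2 u \<Longrightarrow> fst ` set \<delta> \<subseteq> fst ` set \<alpha>2 \<and> INV N n r1 x2 \<alpha>2 y2 y"
proof (induction rule: run.induct)
  case (run_Nil x) then show ?case by simp
next
  case (run_Cons x p y \<sigma> z)
  note neg = irr_facts(1)[OF irr] and det = irr_facts(3)[OF irr] and acy = irr_facts(4)[OF irr]
    and nd = irr_facts(6)[OF irr]
  obtain k s where p: "p = (k, s)" by (cases p)
  have stp: "step N x (k, s) y" using run_Cons(1) p by simp
  then have st: "k \<in> atoms N" "s \<in> outcomes N k" "enables N x k"
    "y = (\<lambda>a. if a \<in> parties N k then succ N k a s else x a)" by (auto simp: step_iff)
  have nQk: "\<not> Q N k" using run_Cons(5) p by simp
  have pk: "x c = {k}" if "c \<in> parties N k" for c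
    using enabled_tok[OF run_Cons(4) st(3) that] .
  have pkA: "parties N k \<subseteq> agents N" "parties N k \<noteq> {}" using neg_atom[OF neg st(1)] by auto
  have inx: "(b \<in> parties N n \<and> succ N n b r1 = {k'}) \<or> R N x2 \<alpha>2 y2 b k'"
    if "b \<in> agents N" "x b = {k'}" for b k'
    using run_Cons(6) that unfolding INV_def by blast
  have kin: "k \<in> fst ` set \<alpha>2"
  proof (rule ccontr)
    assume kn: "k \<notin> fst ` set \<alpha>2"
    have all: "c \<in> parties N n \<and> succ N n c r1 = {k}" if c: "c \<in> parties N k" for c
    proof -
      have cA: "c \<in> agents N" using c pkA by blast
      have "\<not> R N x2 \<alpha>2 y2 c k"
      proof
        assume "R N x2 \<alpha>2 y2 c k"
        from vis[OF this] y2F cA have "k = F2 \<or> (\<exists>s. (k, s) \<in> set \<alpha>2 \<and> c \<in> parties N k)" by blast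
        then show False
        proof
          assume "k = F2" then show False using QF2 nQk by simp
        next
          assume "\<exists>s. (k, s) \<in> set \<alpha>2 \<and> c \<in> parties N k"
          then show False using kn by force
        qed
      qed
      then show ?thesis using inx[OF cA pk[OF c]] by blast
    qed
    obtain c0 where c0: "c0 \<in> parties N k" using pkA by blast
    have "(n, c0, r1) \<in> T N" using all[OF c0] n by (simp add: T_mem)
    then have g: "(n, k) \<in> graph N" using graph_I all[OF c0] by fastforce
    have nk: "n \<noteq> k"
    proof
      assume "n = k"
      then have "(n, n) \<in> (graph N)\<^sup>+" using g by auto
      then show False using acy unfolding acyclic_def by blast
    qed
    have ue: "uncond_enables N n r1 k" unfolding uncond_enables_def using all by blast
    have c1: "card (outcomes N k) \<le> 1" using nQk unfolding Q_def by simp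
    have imp: "(\<exists>(m, b, s) \<in> T N. m \<noteq> n \<and> k \<in> succ N m b s) \<longrightarrow>
         (\<exists>(m, b, s) \<in> T N. m \<noteq> n \<and> succ N m b s = {k})"
    proof
      assume "\<exists>(m, b, s) \<in> T N. m \<noteq> n \<and> k \<in> succ N m b s"
      then obtain m b s' where t: "(m, b, s') \<in> T N" "m \<noteq> n" "k \<in> succ N m b s'" by blast
      have t': "m \<in> atoms N" "b \<in> parties N m" "s' \<in> outcomes N m" using t(1) by (simp_all add: T_mem)
      have "m \<noteq> fin N" using succ_facts(2)[OF neg t'] t(3) by auto
      then obtain k' where "succ N m b s' = {k'}" using succ_det[OF neg det t'] by blast
      then have "succ N m b s' = {k}" using t(3) by simp
      then show "\<exists>(m, b, s) \<in> T N. m \<noteq> n \<and> succ N m b s = {k}" using t by blast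
    qed
    have "dshortcut_guard N"
      unfolding dshortcut_guard_def using n st(1) nk ue c1 imp by blast
    then show False using nd by simp
  qed
  have sy: "SING y" by (rule step_SING[OF neg det stp run_Cons(4)])
  have invy: "INV N n r1 x2 \<alpha>2 y2 y"
    unfolding INV_def
  proof (intro ballI allI impI)
    fix b k'' assume bA: "b \<in> agents N" and yb: "y b = {k''}"
    show "(b \<in> parties N n \<and> succ N n b r1 = {k''}) \<or> R N x2 \<alpha>2 y2 b k''"
    proof (cases "b \<in> parties N k")
      case False
      then have "x b = {k''}" using yb st(4) by simp
      then show ?thesis using inx[OF bA] by blast
    next
      case True
      then have sb: "succ N k b s = {k''}" using yb st(4) by simp
      from kin obtain s' where "(k, s') \<in> set \<alpha>2" by force
      then obtain \<gamma> \<delta>' where a2: "\<alpha>2 = \<gamma> @ (k, s') # \<delta>'" by (meson split_list)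
      then obtain w w' where w: "run N x2 \<gamma> w" "step N w (k, s') w'" "run N w' \<delta>' y2"
        using run2 by (auto simp: run_append run_Cons_iff)
      have s's: "s' = s" using one_outcome[OF neg st(1) nQk st(2)] w(2) by (simp add: step_iff)
      have "w' b = succ N k b s'" using w(2) True by (simp add: step_iff)
      then have wb: "w' b = {k''}" using sb s's by simp
      have "run N x2 (\<gamma> @ [(k, s')]) w'" using w(1,2) by (auto simp: run_append run_Cons_iff run_Nil_iff)
      then have "R N x2 \<alpha>2 y2 b k''" unfolding R_def using a2 w(3) wb
        by (intro exI[of _ "\<gamma> @ [(k, s')]"] exI[of _ \<delta>'] exI[of _ w']) simp
      then show ?thesis by blast
    qed
  qed
  have "\<forall>p\<in>set \<sigma>. \<not> Q N (fst p)" using run_Cons(5) by simp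
  from run_Cons(3)[OF sy this invy] show ?case using kin p by simp
qed

lemma R_start: "run N x \<alpha> y \<Longrightarrow> x b = {k} \<Longrightarrow> R N x \<alpha> y b k"
  unfolding R_def by (intro exI[of _ "[]"] exI[of _ \<alpha>] exI[of _ x]) (simp add: run_Nil_iff)

theorem lemma1:
  fixes \<N> :: "('a, 's, 'n, 'r) negotiation" and n :: 'n
  assumes "irreducible \<N>"
    and "n \<in> atoms \<N>"
    and "n \<noteq> fin \<N>"
    and "card (outcomes \<N> n) > 1"
  shows "agents \<N> \<subseteq> parties \<N> n"
proof (rule ccontr)
  assume nA: "\<not> agents \<N> \<subseteq> parties \<N> n"
  note irr = assms(1)
  note neg = irr_facts(1)[OF irr] and snd = irr_facts(2)[OF irr] and det = irr_facts(3)[OF irr]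
    and acy = irr_facts(4)[OF irr] and nm = irr_facts(5)[OF irr]
  define CE where "CE = (\<lambda>(m, z). m \<in> atoms \<N> \<and> m \<noteq> fin \<N> \<and> 1 < card (outcomes \<N> m) \<and>
     \<not> agents \<N> \<subseteq> parties \<N> m \<and> reachable \<N> z \<and> enables \<N> z m)"
  obtain z0 where "reachable \<N> z0" "enables \<N> z0 n"
    using snd assms(2) unfolding sound_def by blast
  then have "CE (n, z0)" unfolding CE_def using assms nA by simp
  from ex_has_least_nat[of CE, OF this, of "\<lambda>p. mu \<N> (snd p)"]
  obtain p where "CE p" and minp: "\<forall>q. CE q \<longrightarrow> mu \<N> (snd p) \<le> mu \<N> (snd q)" by blast
  then obtain m z where pz: "p = (m, z)" by (cases p)
  with \<open>CE p\<close> have m: "m \<in> atoms \<N>" "m \<noteq> fin \<N>" "1 < card (outcomes \<N> m)"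
    "\<not> agents \<N> \<subseteq> parties \<N> m" "reachable \<N> z" "enables \<N> z m"
    unfolding CE_def by auto
  have min: "mu \<N> z \<le> mu \<N> z'" if "CE (m', z')" for m' z'
    using minp that pz by fastforce
  have sz: "SING z" using reachable_SING[OF neg det m(5)] .
  have build: "\<exists>\<alpha> y F. run \<N> (\<lambda>a. if a \<in> parties \<N> m then succ \<N> m a r else z a) \<alpha> y \<and>
      (\<forall>p\<in>set \<alpha>. \<not> Q \<N> (fst p)) \<and> Q \<N> F \<and> (\<forall>c\<in>agents \<N>. y c = {F})"
    if r: "r \<in> outcomes \<N> m" for r
  proof -
    define zr where "zr = (\<lambda>a. if a \<in> parties \<N> m then succ \<N> m a r else z a)"
    have stz: "step \<N> z (m, r) zr" unfolding zr_def using m r by (simp add: step_iff)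
    then have rz: "run \<N> z [(m, r)] zr" by (simp add: run_Cons_iff run_Nil_iff)
    have reach: "reachable \<N> zr" using reachable_run[OF m(5) rz] .
    then obtain \<sigma> where "run \<N> (x0 \<N>) \<sigma> zr" unfolding reachable_def by blast
    then obtain \<sigma>' where sr: "run \<N> zr \<sigma>' xf" using snd unfolding sound_def by blast
    obtain c where c: "c \<in> parties \<N> m" using neg_atom(1)[OF neg m(1)] by blast
    have "zr c \<noteq> {}" unfolding zr_def using c succ_facts(2)[OF neg m(1) c r] m(2) by simp
    from reach_fin[OF neg sr this] obtain sf where "(fin \<N>, sf) \<in> set \<sigma>'" unfolding xf_def by blast
    moreover have "Q \<N> (fin \<N>)" unfolding Q_def using neg_basic(6)[OF neg] by simp
    ultimately have "\<exists>p\<in>set \<sigma>'. Q \<N> (fst p)" by force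
    from split_list_first_prop[OF this] obtain \<alpha> pF \<beta> where
      spl: "\<sigma>' = \<alpha> @ pF # \<beta>" "Q \<N> (fst pF)" "\<forall>p\<in>set \<alpha>. \<not> Q \<N> (fst p)" by blast
    obtain F sF where pF: "pF = (F, sF)" by (cases pF)
    from sr spl(1) pF obtain y y' where ry: "run \<N> zr \<alpha> y" and sy: "step \<N> y (F, sF) y'"
      by (auto simp: run_append run_Cons_iff)
    have Fst: "F \<in> atoms \<N>" "enables \<N> y F" using sy by (auto simp: step_iff)
    have QF: "Q \<N> F" using spl(2) pF by simp
    have reachy: "reachable \<N> y" using reachable_run[OF reach ry] .
    have full: "agents \<N> \<subseteq> parties \<N> F"
    proof (rule ccontr)
      assume nF: "\<not> agents \<N> \<subseteq> parties \<N> F"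
      then have "F \<noteq> fin \<N>" using neg_basic(6)[OF neg] by auto
      moreover have "1 < card (outcomes \<N> F)" using QF nF unfolding Q_def by simp
      ultimately have "CE (F, y)" unfolding CE_def using Fst nF reachy by simp
      then have "mu \<N> z \<le> mu \<N> y" by (rule min)
      moreover have "mu \<N> zr < mu \<N> z" by (rule mu_step[OF neg acy stz sz])
      moreover have "mu \<N> y \<le> mu \<N> zr" by (rule mu_run[OF neg det acy ry reachable_SING[OF neg det reach]])
      ultimately show False by linarith
    qed
    have "\<forall>c\<in>agents \<N>. y c = {F}"
      using enabled_tok[OF reachable_SING[OF neg det reachy] Fst(2)] full by blast
    then show ?thesis using ry spl(3) QF unfolding zr_def by blast
  qed
  obtain r1 r2 where r12: "r1 \<in> outcomes \<N> m" "r2 \<in> outcomes \<N> m" "r1 \<noteq> r2"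
  proof -
    have "\<not> card (outcomes \<N> m) \<le> Suc 0" using m(3) by simp
    then show ?thesis using that card_le_Suc0_iff_eq[OF neg_atom(3)[OF neg m(1)]] by blast
  qed
  then obtain a where a: "a \<in> parties \<N> m" "succ \<N> m a r1 \<noteq> succ \<N> m a r2"
    using nm m(1) unfolding merge_guard_def by blast
  obtain b where b: "b \<in> agents \<N>" "b \<notin> parties \<N> m" using m(4) by blast
  define z1 where "z1 = (\<lambda>a. if a \<in> parties \<N> m then succ \<N> m a r1 else z a)"
  define z2 where "z2 = (\<lambda>a. if a \<in> parties \<N> m then succ \<N> m a r2 else z a)"
  obtain \<alpha>1 y1 F1 where B1: "run \<N> z1 \<alpha>1 y1" "\<forall>p\<in>set \<alpha>1. \<not> Q \<N> (fst p)" "Q \<N> F1"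
    "\<forall>c\<in>agents \<N>. y1 c = {F1}" using build[OF r12(1)] unfolding z1_def by blast
  obtain \<alpha>2 y2 F2 where B2: "run \<N> z2 \<alpha>2 y2" "\<forall>p\<in>set \<alpha>2. \<not> Q \<N> (fst p)" "Q \<N> F2"
    "\<forall>c\<in>agents \<N>. y2 c = {F2}" using build[OF r12(2)] unfolding z2_def by blast
  have stz1: "step \<N> z (m, r1) z1" unfolding z1_def using m r12 by (simp add: step_iff)
  have stz2: "step \<N> z (m, r2) z2" unfolding z2_def using m r12 by (simp add: step_iff)
  have sz1: "SING z1" by (rule step_SING[OF neg det stz1 sz])
  have sz2: "SING z2" by (rule step_SING[OF neg det stz2 sz])
  have I1: "INV \<N> m r1 z2 \<alpha>2 y2 z1" unfolding INV_def
  proof (intro ballI allI impI)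
    fix c k assume "c \<in> agents \<N>" "z1 c = {k}"
    then show "(c \<in> parties \<N> m \<and> succ \<N> m c r1 = {k}) \<or> R \<N> z2 \<alpha>2 y2 c k"
      using R_start[OF B2(1), of c k] unfolding z1_def z2_def by (cases "c \<in> parties \<N> m") auto
  qed
  have I2: "INV \<N> m r2 z1 \<alpha>1 y1 z2" unfolding INV_def
  proof (intro ballI allI impI)
    fix c k assume "c \<in> agents \<N>" "z2 c = {k}"
    then show "(c \<in> parties \<N> m \<and> succ \<N> m c r2 = {k}) \<or> R \<N> z1 \<alpha>1 y1 c k"
      using R_start[OF B1(1), of c k] unfolding z1_def z2_def by (cases "c \<in> parties \<N> m") auto
  qed
  from inv_run[OF irr m(1) r12(1) B2, OF B1(1) sz1 B1(2) I1]
  have V12: "fst ` set \<alpha>1 \<subseteq> fst ` set \<alpha>2" and J1: "INV \<N> m r1 z2 \<alpha>2 y2 y1" by auto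
  from inv_run[OF irr m(1) r12(2) B1, OF B2(1) sz2 B2(2) I2]
  have V21: "fst ` set \<alpha>2 \<subseteq> fst ` set \<alpha>1" by auto
  have F12: "F1 = F2"
  proof -
    have "R \<N> z2 \<alpha>2 y2 b F1" using J1 b B1(4) unfolding INV_def by blast
    from vis[OF this] B2(4) b(1) have "F1 = F2 \<or> (\<exists>s. (F1, s) \<in> set \<alpha>2 \<and> b \<in> parties \<N> F1)" by blast
    then show ?thesis using B2(2) B1(3) by auto
  qed
  have mF: "m \<noteq> fin \<N>" using m(2) .
  obtain m1 where m1: "succ \<N> m a r1 = {m1}" using succ_det[OF neg det m(1) a(1) r12(1) mF] by blast
  obtain m2 where m2: "succ \<N> m a r2 = {m2}" using succ_det[OF neg det m(1) a(1) r12(2) mF] by blast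
  have m12: "m1 \<noteq> m2" using a(2) m1 m2 by auto
  have z1a: "z1 a = {m1}" unfolding z1_def using a(1) m1 by simp
  have z2a: "z2 a = {m2}" unfolding z2_def using a(1) m2 by simp
  have aA: "a \<in> agents \<N>" using a(1) neg_atom(2)[OF neg m(1)] by blast
  have c1: "m1 = F1 \<or> (\<exists>s. (m1, s) \<in> set \<alpha>1 \<and> a \<in> parties \<N> m1)"
    using vis[OF R_start[OF B1(1) z1a]] B1(4) aA by blast
  have c2: "m2 = F2 \<or> (\<exists>s. (m2, s) \<in> set \<alpha>2 \<and> a \<in> parties \<N> m2)"
    using vis[OF R_start[OF B2(1) z2a]] B2(4) aA by blast
  have F1n: "F1 \<notin> fst ` set \<alpha>1" using B1(2,3) by auto
  have F2n: "F2 \<notin> fst ` set \<alpha>2" using B2(2,3) by auto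
  show False
  proof (cases "m1 = F1")
    case True
    show False
    proof (cases "m2 = F2")
      case True
      then show False using \<open>m1 = F1\<close> F12 m12 by simp
    next
      case False
      then obtain s where s: "(m2, s) \<in> set \<alpha>2" "a \<in> parties \<N> m2" using c2 by blast
      then have "m2 \<in> fst ` set \<alpha>1" using V21 by force
      then obtain s' where "(m2, s') \<in> set \<alpha>1" by force
      from track[OF B1(1) this s(2)] z1a have "m2 = m1 \<or> m1 \<in> fst ` set \<alpha>1" by auto
      then show False using m12 \<open>m1 = F1\<close> F1n by auto
    qed
  next
    case False
    then obtain s where s: "(m1, s) \<in> set \<alpha>1" "a \<in> parties \<N> m1" using c1 by blast
    show False
    proof (cases "m2 = F2")
      case True
      have "m1 \<in> fst ` set \<alpha>2" using V12 s(1) by force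
      then obtain s' where "(m1, s') \<in> set \<alpha>2" by force
      from track[OF B2(1) this s(2)] z2a have "m1 = m2 \<or> m2 \<in> fst ` set \<alpha>2" by auto
      then show False using m12 \<open>m2 = F2\<close> F2n by auto
    next
      case False
      then obtain t where t: "(m2, t) \<in> set \<alpha>2" "a \<in> parties \<N> m2" using c2 by blast
      have "m2 \<in> fst ` set \<alpha>1" using V21 t(1) by force
      then obtain t' where "(m2, t') \<in> set \<alpha>1" by force
      from track[OF B1(1) this t(2)] z1a m12 have g1: "(m1, m2) \<in> (graph \<N>)\<^sup>+" by auto
      have "m1 \<in> fst ` set \<alpha>2" using V12 s(1) by force
      then obtain s' where "(m1, s') \<in> set \<alpha>2" by force
      from track[OF B2(1) this s(2)] z2a m12 have g2: "(m2, m1) \<in> (graph \<N>)\<^sup>+" by auto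
      have "(m1, m1) \<in> (graph \<N>)\<^sup>+" using g1 g2 by simp
      then show False using acy unfolding acyclic_def by blast
    qed
  qed
qed

end
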